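(* Suppose Assumption A holds with constant $d$. Let $(m_\epsilon)_{\epsilon\in(0,1)}\subset\mathbb N$ be such that there is a constant $L\in[1,\infty)$ (depending on $\theta^\circ,\lambda,\eta$) with $\sup_{0<\epsilon<1}\epsilon\,m_\epsilon\Lambda_{(m_\epsilon)}/\Phi^{m_\epsilon}_\epsilon\le L$, and $\Phi^{m_\epsilon}_\epsilon\to0$ as $\epsilon\to0$. Put $K:=((1+d^{-1})\vee d^{-2}\|\theta^\circ-\eta\|^2)L$. Then there exists $\epsilon_\theta\in(0,1)$ such that for all $\epsilon\in(0,\epsilon_\theta)$ and all $c\in(0,1/(8K))$, $$\mathbb E_{\theta^\circ}P_{\vartheta^{m_\epsilon}|Y}\Big(\|\vartheta^{m_\epsilon}-\theta^\circ\|^2>(4+\tfrac{11}{2}K)\Phi^{m_\epsilon}_\epsilon\Big)\le2\exp(-m_\epsilon/36),$$ $$\mathbb E_{\theta^\circ}P_{\vartheta^{m_\epsilon}|Y}\Big(\|\vartheta^{m_\epsilon}-\theta^\circ\|^2<(1-8cK)(1+d^{-1})^{-1}\Phi^{m_\epsilon}_\epsilon\Big)\le2\exp(-c^2m_\epsilon/2).$$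
   Context: Let $\ell^2$ be the space of square-summable real sequences with norm $\|\cdot\|$. Fix a bounded real sequence $\lambda=(\lambda_j)_{j\ge1}$ with $\lambda_j\ne0$ for all $j$, a noise level $\epsilon\in(0,1)$ and a true parameter $\theta^\circ\in\ell^2$. The data $Y=(Y_j)_{j\ge1}$ satisfy $Y_j=\lambda_j\theta^\circ_j+\sqrt\epsilon\,\xi_j$ with $\xi_j$ i.i.d. $N(0,1)$; $\mathbb E_{\theta^\circ}$, $P_{\theta^\circ}$ denote expectation and probability under this law. Fix prior means $\eta=(\eta_j)_{j\ge1}$ with $\theta^\circ-\eta\in\ell^2$ and prior variances $\tau_j\in(0,\infty)$ (possibly depending on $\epsilon$). For $m\in\mathbb N$ the sieve prior $P_{\vartheta^m}$ is the law of $\vartheta^m=(\vartheta^m_j)_{j\ge1}$ with independent coordinates, $\vartheta^m_j\sim N(\eta_j,\tau_j)$ for $j\le m$ and $\vartheta^m_j=\eta_j$ a.s. for $j>m$, in the model $Y_j=\lambda_j\vartheta^m_j+\sqrt\epsilon\xi_j$ with $\vartheta^m$ independent of $(\xi_j)$. Put $\sigma_j:=(\lambda_j^2\epsilon^{-1}+\tau_j^{-1})^{-1}$ and $\theta^Y_j:=\sigma_j(\tau_j^{-1}\eta_j+\lambda_j\epsilon^{-1}Y_j)$. The posterior $P_{\vartheta^m|Y}$ makes the coordinates independent with $\vartheta^m_j\sim N(\theta^Y_j,\sigma_j)$ for $j\le m$ and $\vartheta^m_j=\eta_j$ for $j>m$; the Bayes estimator is $\hat\theta^m:=\mathbb E[\vartheta^m|Y]$.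 Define $b_m:=\sum_{j>m}(\theta^\circ_j-\eta_j)^2$. Let $\Lambda_j:=\lambda_j^{-2}$, $\Lambda_{(m)}:=\max_{1\le j\le m}\Lambda_j$, $\bar\Lambda_m:=m^{-1}\sum_{j=1}^m\Lambda_j$ and $\Phi^m_\epsilon:=b_m\vee\epsilon m\bar\Lambda_m$. Let $G_\epsilon:=\max\{1\le m\le\lfloor\epsilon^{-1}\rfloor:\epsilon\Lambda_{(m)}\le\Lambda_1\}$. Assumption A: there is a constant $d>0$ such that $\tau_j\ge d\,(\epsilon^{1/2}\Lambda_j^{1/2}\vee\epsilon\Lambda_j)$ for all $1\le j\le G_\epsilon$ and all $\epsilon\in(0,1)$. *)

theory Defs
  imports "HOL-Probability.Probability"
begin

text \<open>Indexing convention: the paper's coordinate j (j >= 1) is coordinate j-1 here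
  (0-based). Sequences are functions nat => real.\<close>

definition Lam :: "(nat \<Rightarrow> real) \<Rightarrow> nat \<Rightarrow> real" where
  "Lam lam j = 1 / (lam j)^2"

definition LamMax :: "(nat \<Rightarrow> real) \<Rightarrow> nat \<Rightarrow> real" where
  "LamMax lam m = Max {Lam lam j | j. j < m}"

definition LamBar :: "(nat \<Rightarrow> real) \<Rightarrow> nat \<Rightarrow> real" where
  "LamBar lam m = (\<Sum>j<m. Lam lam j) / real m"

definition bias :: "(nat \<Rightarrow> real) \<Rightarrow> (nat \<Rightarrow> real) \<Rightarrow> nat \<Rightarrow> real" where
  "bias th eta m = (\<Sum>j. (th (j + m) - eta (j + m))^2)"

definition Phi :: "(nat \<Rightarrow> real) \<Rightarrow> (nat \<Rightarrow> real) \<Rightarrow> (nat \<Rightarrow> real) \<Rightarrow> real \<Rightarrow> nat \<Rightarrow> real" where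
  "Phi lam th eta eps m = max (bias th eta m) (eps * real m * LamBar lam m)"

definition Geps :: "(nat \<Rightarrow> real) \<Rightarrow> real \<Rightarrow> nat" where
  "Geps lam eps = Max {m. 1 \<le> m \<and> m \<le> nat \<lfloor>1 / eps\<rfloor> \<and> eps * LamMax lam m \<le> Lam lam 0}"

definition sqdist :: "(nat \<Rightarrow> real) \<Rightarrow> (nat \<Rightarrow> real) \<Rightarrow> real" where
  "sqdist x y = (\<Sum>j. (x j - y j)^2)"

definition gauss :: "real \<Rightarrow> real \<Rightarrow> real measure" where
  "gauss mu v = density lborel (normal_density mu (sqrt v))"

text \<open>Law of the data Y, Y_j = lam_j th_j + sqrt eps xi_j\<close>
definition data_law :: "(nat \<Rightarrow> real) \<Rightarrow> (nat \<Rightarrow> real) \<Rightarrow> real \<Rightarrow> (nat \<Rightarrow> real) measure" where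
  "data_law lam th eps = (\<Pi>\<^sub>M j\<in>UNIV. gauss (lam j * th j) eps)"

definition post_var :: "(nat \<Rightarrow> real) \<Rightarrow> (nat \<Rightarrow> real) \<Rightarrow> real \<Rightarrow> nat \<Rightarrow> real" where
  "post_var lam tau eps j = 1 / ((lam j)^2 / eps + 1 / tau j)"

definition post_mean :: "(nat \<Rightarrow> real) \<Rightarrow> (nat \<Rightarrow> real) \<Rightarrow> (nat \<Rightarrow> real) \<Rightarrow> real \<Rightarrow> (nat \<Rightarrow> real) \<Rightarrow> nat \<Rightarrow> real" where
  "post_mean lam eta tau eps Y j = post_var lam tau eps j * (eta j / tau j + lam j * Y j / eps)"

text \<open>Posterior of the sieve prior with m random coordinates\<close>
definition posterior :: "(nat \<Rightarrow> real) \<Rightarrow> (nat \<Rightarrow> real) \<Rightarrow> (nat \<Rightarrow> real) \<Rightarrow> real \<Rightarrow> nat \<Rightarrow> (nat \<Rightarrow> real) \<Rightarrow> (nat \<Rightarrow> real) measure" where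
  "posterior lam eta tau eps m Y = (\<Pi>\<^sub>M j\<in>UNIV.
     (if j < m then gauss (post_mean lam eta tau eps Y j) (post_var lam tau eps j)
      else return borel (eta j)))"

text \<open>Assumption A with constant d (paper indices 1..G_eps = 0-based indices < G_eps)\<close>
definition assumptionA :: "(nat \<Rightarrow> real) \<Rightarrow> (real \<Rightarrow> nat \<Rightarrow> real) \<Rightarrow> real \<Rightarrow> bool" where
  "assumptionA lam tau d \<longleftrightarrow> d > 0 \<and> (\<forall>eps. 0 < eps \<and> eps < 1 \<longrightarrow>
     (\<forall>j < Geps lam eps. tau eps j \<ge> d * max (sqrt (eps * Lam lam j)) (eps * Lam lam j)))"

end

theory Submission
  imports Defs
begin


lemma expo_id:
  fixes v q s a b m0 x :: real
  assumes v: "v > 0" and q: "q = 1 - 2 * s * a\<^sup>2 * v" "q > 0"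
  shows "-(x-m0)\<^sup>2/(2 * v) + s * (a * x + b)\<^sup>2 = s * (a * m0 + b)\<^sup>2/q - (x - (m0 + 2 * s * a * b * v)/q)\<^sup>2/(2 * (v/q))"
proof -
  have q0: "q \<noteq> 0" using q by simp
  have L: "-(x-m0)\<^sup>2/(2 * v) + s * (a * x + b)\<^sup>2 = (-(x-m0)\<^sup>2 * q + 2 * v * q * s * (a * x + b)\<^sup>2) / (2 * v * q)"
    using v q0 by (simp add: field_simps)
  have R: "s * (a * m0 + b)\<^sup>2/q - (x - (m0 + 2 * s * a * b * v)/q)\<^sup>2/(2 * (v/q))
     = (2 * v * s * (a * m0 + b)\<^sup>2 - (q * x - (m0 + 2 * s * a * b * v))\<^sup>2) / (2 * v * q)"
    using v q0 by (simp add: field_simps power2_eq_square)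
  have P: "-(x-m0)\<^sup>2 * q + 2 * v * q * s * (a * x + b)\<^sup>2 = 2 * v * s * (a * m0 + b)\<^sup>2 - (q * x - (m0 + 2 * s * a * b * v))\<^sup>2"
    unfolding q(1) by algebra
  show ?thesis using L R P by simp
qed


lemma nn_integral_normal_density: "sg > 0 \<Longrightarrow> (\<integral>\<^sup>+x. ennreal (normal_density m0 sg x) \<partial>lborel) = 1"
  by (subst nn_integral_eq_integral) (auto simp: normal_density_nonneg)

lemma gauss_mgf:
  fixes v q s a b m0 :: real
  assumes v: "v > 0" and q: "q = 1 - 2 * s * a\<^sup>2 * v" "q > 0"
  shows "(\<integral>\<^sup>+x. ennreal (exp (s * (a * x + b)\<^sup>2)) \<partial>gauss m0 v) = ennreal (exp (s * (a * m0 + b)\<^sup>2 / q) / sqrt q)"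
proof -
  define m1 where "m1 = (m0 + 2 * s * a * b * v)/q"
  have pt: "normal_density m0 (sqrt v) x * exp (s * (a * x + b)\<^sup>2)
     = (exp (s * (a * m0 + b)\<^sup>2 / q) / sqrt q) * normal_density m1 (sqrt (v/q)) x" for x
  proof -
    have e: "-(x-m0)\<^sup>2/(2 * v) + s * (a * x + b)\<^sup>2 = s * (a * m0 + b)\<^sup>2/q - (x - m1)\<^sup>2/(2 * (v/q))"
      unfolding m1_def by (rule expo_id[OF v q])
    have "normal_density m0 (sqrt v) x * exp (s * (a * x + b)\<^sup>2)
        = 1 / sqrt (2 * pi * v) * exp (-(x-m0)\<^sup>2/(2 * v) + s * (a * x + b)\<^sup>2)"
      using v by (simp add: normal_density_def mult_exp_exp algebra_simps)
    also have "\<dots> = 1 / sqrt (2 * pi * v) * exp (s * (a * m0 + b)\<^sup>2/q - (x - m1)\<^sup>2/(2 * (v/q)))"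
      by (simp only: e)
    also have "\<dots> = 1 / sqrt (2 * pi * v) * exp (s * (a * m0 + b)\<^sup>2/q) * exp (- (x - m1)\<^sup>2/(2 * (v/q)))"
      by (simp add: mult_exp_exp)
    also have "\<dots> = (exp (s * (a * m0 + b)\<^sup>2 / q) / sqrt q) * normal_density m1 (sqrt (v/q)) x"
      using v q(2) by (simp add: normal_density_def real_sqrt_mult real_sqrt_divide field_simps)
    finally show ?thesis .
  qed
  have "(\<integral>\<^sup>+x. ennreal (exp (s * (a * x + b)\<^sup>2)) \<partial>gauss m0 v)
      = (\<integral>\<^sup>+x. ennreal (normal_density m0 (sqrt v) x) * ennreal (exp (s * (a * x + b)\<^sup>2)) \<partial>lborel)"
    unfolding gauss_def by (subst nn_integral_density) auto
  also have "\<dots> = (\<integral>\<^sup>+x. ennreal (exp (s * (a * m0 + b)\<^sup>2 / q) / sqrt q) * ennreal (normal_density m1 (sqrt (v/q)) x) \<partial>lborel)"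
  proof (intro nn_integral_cong)
    fix x
    have "ennreal (normal_density m0 (sqrt v) x) * ennreal (exp (s * (a * x + b)\<^sup>2))
      = ennreal (normal_density m0 (sqrt v) x * exp (s * (a * x + b)\<^sup>2))"
      by (simp add: ennreal_mult normal_density_nonneg)
    also have "\<dots> = ennreal ((exp (s * (a * m0 + b)\<^sup>2 / q) / sqrt q) * normal_density m1 (sqrt (v/q)) x)"
      by (simp only: pt)
    also have "\<dots> = ennreal (exp (s * (a * m0 + b)\<^sup>2 / q) / sqrt q) * ennreal (normal_density m1 (sqrt (v/q)) x)"
      using q(2) by (intro ennreal_mult) (auto simp: normal_density_nonneg)
    finally show "ennreal (normal_density m0 (sqrt v) x) * ennreal (exp (s * (a * x + b)\<^sup>2)) = ennreal (exp (s * (a * m0 + b)\<^sup>2 / q) / sqrt q) * ennreal (normal_density m1 (sqrt (v/q)) x)" .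
  qed
  also have "\<dots> = ennreal (exp (s * (a * m0 + b)\<^sup>2 / q) / sqrt q)"
    using v q by (subst nn_integral_cmult) (auto simp: nn_integral_normal_density)
  finally show ?thesis .
qed


lemma nn_integral_PiM_prod_finite:
  fixes M :: "'i \<Rightarrow> 'a measure" and f :: "'i \<Rightarrow> 'a \<Rightarrow> ennreal"
  assumes P: "\<And>i. prob_space (M i)" and J: "finite J" "J \<subseteq> I"
    and f[measurable]: "\<And>i. i\<in>J \<Longrightarrow> f i \<in> borel_measurable (M i)"
  shows "(\<integral>\<^sup>+x. (\<Prod>i\<in>J. f i (x i)) \<partial>PiM I M) = (\<Prod>i\<in>J. integral\<^sup>N (M i) (f i))"
proof -
  interpret product_prob_space M I by (rule product_prob_spaceI) (rule P)
  have mg: "(\<lambda>y. \<Prod>i\<in>J. f i (y i)) \<in> borel_measurable (PiM J M)"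
  proof (intro borel_measurable_prod_ennreal)
    fix i assume i: "i \<in> J"
    show "(\<lambda>y. f i (y i)) \<in> borel_measurable (PiM J M)"
      by (rule measurable_compose[of "\<lambda>x. x i" "PiM J M" "M i" "f i" borel]) (auto simp: i f)
  qed
  have "(\<integral>\<^sup>+x. (\<Prod>i\<in>J. f i (x i)) \<partial>PiM I M) = (\<integral>\<^sup>+x. (\<lambda>y. \<Prod>i\<in>J. f i (y i)) (restrict x J) \<partial>PiM I M)"
    by (intro nn_integral_cong prod.cong) auto
  also have "\<dots> = (\<integral>\<^sup>+y. (\<Prod>i\<in>J. f i (y i)) \<partial>distr (PiM I M) (PiM J M) (\<lambda>x. restrict x J))"
  proof -
    have "(\<integral>\<^sup>+y. (\<Prod>i\<in>J. f i (y i)) \<partial>distr (PiM I M) (PiM J M) (\<lambda>x. restrict x J))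
       = (\<integral>\<^sup>+x. (\<lambda>y. \<Prod>i\<in>J. f i (y i)) (restrict x J) \<partial>PiM I M)"
      by (rule nn_integral_distr[OF measurable_restrict_subset[OF J(2)]]) (simp add: mg)
    then show ?thesis by simp
  qed
  also have "\<dots> = (\<integral>\<^sup>+y. (\<Prod>i\<in>J. f i (y i)) \<partial>PiM J M)"
    by (simp add: distr_PiM_restrict_finite J)
  also have "\<dots> = (\<Prod>i\<in>J. integral\<^sup>N (M i) (f i))"
    by (rule product_nn_integral_prod) (auto simp: J)
  finally show ?thesis .
qed



lemma post_var_pos: "eps > 0 \<Longrightarrow> tau j > 0 \<Longrightarrow> post_var lam tau eps j > 0"
  unfolding post_var_def by (intro divide_pos_pos add_nonneg_pos) auto

lemma prob_space_gauss: "v > 0 \<Longrightarrow> prob_space (gauss m0 v)"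
  unfolding gauss_def by (rule prob_space_normal_density) simp

lemma prob_space_post_factor: "eps > 0 \<Longrightarrow> tau j > 0 \<Longrightarrow>
  prob_space (if j < m then gauss (post_mean lam eta tau eps Y j) (post_var lam tau eps j) else return borel (eta j))"
  by (auto simp: prob_space_gauss post_var_pos intro: prob_space_return)

lemma sets_gauss[measurable_cong, simp]: "sets (gauss m0 v) = sets borel"
  unfolding gauss_def by simp

lemma sets_post_factor[measurable_cong]:
  "sets (if j < m then gauss a b else return borel c) = sets borel"
  by simp

lemma sqdist_split:
  assumes sm: "summable (\<lambda>j. (th j - eta j)\<^sup>2)" and v: "\<forall>j. m \<le> j \<longrightarrow> v j = eta j"
  shows "sqdist v th = bias th eta m + (\<Sum>j<m. (v j - th j)\<^sup>2)"
proof -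
  have e: "(\<lambda>j. (v (j + m) - th (j + m))\<^sup>2) = (\<lambda>j. (th (j + m) - eta (j + m))\<^sup>2)"
    using v by (auto simp: power2_commute)
  have "summable (\<lambda>j. (th (j + m) - eta (j + m))\<^sup>2)"
    using sm by (subst summable_iff_shift) 
  then have "summable (\<lambda>j. (v (j + m) - th (j + m))\<^sup>2)" by (simp add: e)
  then have s: "summable (\<lambda>j. (v j - th j)\<^sup>2)" by (subst (asm) summable_iff_shift)
  show ?thesis unfolding sqdist_def bias_def
    using suminf_split_initial_segment[OF s, of m] e by simp
qed

lemma post_mgf:
  fixes lam eta th tau Y :: "nat \<Rightarrow> real"
  assumes eps: "eps > 0" and tau: "\<And>j. tau j > 0" and sm: "summable (\<lambda>j. (th j - eta j)\<^sup>2)"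
    and q: "\<And>j. j < m \<Longrightarrow> 1 - 2 * s * post_var lam tau eps j > 0"
  shows "(\<integral>\<^sup>+v. ennreal (exp (s * sqdist v th)) \<partial>posterior lam eta tau eps m Y)
     = ennreal (exp (s * bias th eta m) * (\<Prod>j<m. exp (s * (post_mean lam eta tau eps Y j - th j)\<^sup>2 / (1 - 2 * s * post_var lam tau eps j)) / sqrt (1 - 2 * s * post_var lam tau eps j)))"
proof -
  let ?M = "\<lambda>j. if j < m then gauss (post_mean lam eta tau eps Y j) (post_var lam tau eps j) else return borel (eta j)"
  interpret product_prob_space ?M UNIV by (rule product_prob_spaceI) (rule prob_space_post_factor[OF eps tau])
  have AE: "AE v in posterior lam eta tau eps m Y. \<forall>j. m \<le> j \<longrightarrow> v j = eta j"
    unfolding posterior_def AE_all_countable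
  proof
    fix j
    show "AE v in PiM UNIV ?M. m \<le> j \<longrightarrow> v j = eta j"
    proof (cases "j < m")
      case True then show ?thesis by simp
    next
      case False
      have "AE x in ?M j. x = eta j" using False by (simp add: AE_return)
      then have "AE v in PiM UNIV ?M. v j = eta j" by (rule AE_component[OF UNIV_I])
      then show ?thesis by auto
    qed
  qed
  have "(\<integral>\<^sup>+v. ennreal (exp (s * sqdist v th)) \<partial>posterior lam eta tau eps m Y)
      = (\<integral>\<^sup>+v. ennreal (exp (s * bias th eta m)) * (\<Prod>j<m. ennreal (exp (s * (v j - th j)\<^sup>2))) \<partial>posterior lam eta tau eps m Y)"
  proof (rule nn_integral_cong_AE)
    show "AE v in posterior lam eta tau eps m Y. ennreal (exp (s * sqdist v th)) = ennreal (exp (s * bias th eta m)) * (\<Prod>j<m. ennreal (exp (s * (v j - th j)\<^sup>2)))"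
      using AE
    proof eventually_elim
      case (elim v)
      have "exp (s * sqdist v th) = exp (s * bias th eta m) * (\<Prod>j<m. exp (s * (v j - th j)\<^sup>2))"
        by (simp add: sqdist_split[OF sm elim] distrib_left exp_add exp_sum sum_distrib_left)
      then show ?case by (simp add: prod_ennreal ennreal_mult prod_nonneg)
    qed
  qed
  also have "\<dots> = ennreal (exp (s * bias th eta m)) * (\<integral>\<^sup>+v. (\<Prod>j<m. ennreal (exp (s * (v j - th j)\<^sup>2))) \<partial>posterior lam eta tau eps m Y)"
    unfolding posterior_def by (rule nn_integral_cmult) measurable
  also have "(\<integral>\<^sup>+v. (\<Prod>j<m. ennreal (exp (s * (v j - th j)\<^sup>2))) \<partial>posterior lam eta tau eps m Y)
      = (\<Prod>j<m. integral\<^sup>N (?M j) (\<lambda>x. ennreal (exp (s * (x - th j)\<^sup>2))))"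
    unfolding posterior_def
    by (rule nn_integral_PiM_prod_finite[where f="\<lambda>j x. ennreal (exp (s * (x - th j)\<^sup>2))", OF prob_space_post_factor[OF eps tau]])
       auto
  also have "\<dots> = (\<Prod>j<m. ennreal (exp (s * (post_mean lam eta tau eps Y j - th j)\<^sup>2 / (1 - 2 * s * post_var lam tau eps j)) / sqrt (1 - 2 * s * post_var lam tau eps j)))"
  proof (rule prod.cong[OF refl])
    fix j assume j: "j \<in> {..<m}"
    have "integral\<^sup>N (?M j) (\<lambda>x. ennreal (exp (s * (1 * x + - th j)\<^sup>2)))
        = ennreal (exp (s * (1 * post_mean lam eta tau eps Y j + - th j)\<^sup>2 / (1 - 2 * s * post_var lam tau eps j)) / sqrt (1 - 2 * s * post_var lam tau eps j))"
      using j by (simp only: if_P lessThan_iff) (rule gauss_mgf[OF post_var_pos[OF eps tau]], simp, use q j in auto)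
    then show "integral\<^sup>N (?M j) (\<lambda>x. ennreal (exp (s * (x - th j)\<^sup>2))) = ennreal (exp (s * (post_mean lam eta tau eps Y j - th j)\<^sup>2 / (1 - 2 * s * post_var lam tau eps j)) / sqrt (1 - 2 * s * post_var lam tau eps j))"
      by simp
  qed
  also have "\<dots> = ennreal (\<Prod>j<m. exp (s * (post_mean lam eta tau eps Y j - th j)\<^sup>2 / (1 - 2 * s * post_var lam tau eps j)) / sqrt (1 - 2 * s * post_var lam tau eps j))"
    using q by (intro prod_ennreal divide_nonneg_nonneg) (auto simp: less_imp_le)
  finally show ?thesis using q by (subst ennreal_mult) (auto intro!: prod_nonneg divide_nonneg_nonneg simp: less_imp_le)
qed



lemma coord_mgf:
  fixes l th et t eps s sg V mu :: real
  assumes eps: "eps > 0" and t: "t > 0"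
    and sg: "sg = 1/(l\<^sup>2/eps + 1/t)" and V: "V = sg + sg\<^sup>2 * l\<^sup>2/eps" and mu: "mu = sg * (et - th)/t"
    and qV: "1 - 2 * s * V > 0"
  shows "(\<integral>\<^sup>+y. ennreal (exp (s * (sg * (et/t + l * y/eps) - th)\<^sup>2 / (1 - 2 * s * sg)) / sqrt (1 - 2 * s * sg)) \<partial>gauss (l * th) eps)
       = ennreal (exp (s * mu\<^sup>2 / (1 - 2 * s * V)) / sqrt (1 - 2 * s * V))"
proof -
  have den: "l\<^sup>2/eps + 1/t > 0" using eps t by (intro add_nonneg_pos) auto
  have sgp: "sg > 0" using den sg by simp
  have sgV: "sg \<le> V" using V sgp eps by simp
  define q1 where "q1 = 1 - 2 * s * sg"
  have q1: "q1 > 0"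
  proof (cases "s > 0")
    case True then have "2 * s * sg \<le> 2 * s * V" using sgV by simp
    then show ?thesis using qV unfolding q1_def by linarith
  next
    case False then have "2 * s * sg \<le> 0" using sgp by (simp add: mult_nonpos_nonneg)
    then show ?thesis unfolding q1_def by linarith
  qed
  define a where "a = sg * l/eps"
  define b where "b = sg * et/t - th"
  define s' where "s' = s / q1"
  define q2 where "q2 = 1 - 2 * s' * a\<^sup>2 * eps"
  have q12: "q1 * q2 = 1 - 2 * s * V"
    unfolding q2_def s'_def q1_def a_def V using q1 eps unfolding q1_def
    by (simp add: field_simps power2_eq_square)
  have q2: "q2 > 0" using q12 qV q1 by (metis zero_less_mult_pos)
  have lin: "sg * (et/t + l * y/eps) - th = a * y + b" for y
    unfolding a_def b_def by (simp add: field_simps)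
  have sg1: "sg * (l\<^sup>2/eps + 1/t) = 1" using sg den by simp
  have mu': "a * (l * th) + b = mu"
  proof -
    have "a * (l * th) + b = sg * et / t - th * (1 - sg * l\<^sup>2/eps)"
      unfolding a_def b_def by (simp add: field_simps power2_eq_square)
    also have "1 - sg * l\<^sup>2/eps = sg / t" using sg1 by (simp add: field_simps)
    finally have h: "a * (l * th) + b = sg * et / t - th * (sg / t)" .
    show ?thesis unfolding mu h using t by (simp add: field_simps)
  qed
  have "(\<integral>\<^sup>+y. ennreal (exp (s * (sg * (et/t + l * y/eps) - th)\<^sup>2 / (1 - 2 * s * sg)) / sqrt (1 - 2 * s * sg)) \<partial>gauss (l * th) eps)
     = (\<integral>\<^sup>+y. ennreal (1 / sqrt q1) * ennreal (exp (s' * (a * y + b)\<^sup>2)) \<partial>gauss (l * th) eps)"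
  proof (intro nn_integral_cong)
    fix y
    have "exp (s * (sg * (et/t + l * y/eps) - th)\<^sup>2 / (1 - 2 * s * sg)) / sqrt (1 - 2 * s * sg)
        = (1 / sqrt q1) * exp (s' * (a * y + b)\<^sup>2)"
      unfolding lin s'_def q1_def by simp
    then show "ennreal (exp (s * (sg * (et/t + l * y/eps) - th)\<^sup>2 / (1 - 2 * s * sg)) / sqrt (1 - 2 * s * sg))
        = ennreal (1 / sqrt q1) * ennreal (exp (s' * (a * y + b)\<^sup>2))"
      using q1 by (simp add: ennreal_mult[symmetric])
  qed
  also have "\<dots> = ennreal (1 / sqrt q1) * (\<integral>\<^sup>+y. ennreal (exp (s' * (a * y + b)\<^sup>2)) \<partial>gauss (l * th) eps)"
    by (rule nn_integral_cmult) measurable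
  also have "(\<integral>\<^sup>+y. ennreal (exp (s' * (a * y + b)\<^sup>2)) \<partial>gauss (l * th) eps)
      = ennreal (exp (s' * (a * (l * th) + b)\<^sup>2 / q2) / sqrt q2)"
    by (rule gauss_mgf[OF eps q2_def q2])
  also have "ennreal (1 / sqrt q1) * ennreal (exp (s' * (a * (l * th) + b)\<^sup>2 / q2) / sqrt q2)
      = ennreal (exp (s * mu\<^sup>2 / (1 - 2 * s * V)) / sqrt (1 - 2 * s * V))"
  proof -
    have "(1 / sqrt q1) * (exp (s' * (a * (l * th) + b)\<^sup>2 / q2) / sqrt q2)
        = exp (s * mu\<^sup>2 / (q1 * q2)) / sqrt (q1 * q2)"
      unfolding mu' s'_def using q1 q2 by (simp add: real_sqrt_mult field_simps)
    then show ?thesis using q1 q2 by (simp add: ennreal_mult[symmetric] q12)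
  qed
  finally show ?thesis .
qed



definition Vj where "Vj lam tau eps j = post_var lam tau eps j + (post_var lam tau eps j)\<^sup>2 * (lam j)\<^sup>2 / eps"
definition muj where "muj lam eta th tau eps j = post_var lam tau eps j * (eta j - th j) / tau j"

lemma q1_pos:
  assumes eps: "eps > 0" and t: "tau j > 0" and qV: "1 - 2 * s * Vj lam tau eps j > 0"
  shows "1 - 2 * s * post_var lam tau eps j > 0"
proof -
  have sgp: "post_var lam tau eps j > 0" using eps t by (rule post_var_pos)
  have sgV: "post_var lam tau eps j \<le> Vj lam tau eps j" unfolding Vj_def using eps by simp
  show ?thesis
  proof (cases "s > 0")
    case True then have "2 * s * post_var lam tau eps j \<le> 2 * s * Vj lam tau eps j" using sgV by simp
    then show ?thesis using qV by linarith
  next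
    case False then have "2 * s * post_var lam tau eps j \<le> 0" using sgp by (simp add: mult_nonpos_nonneg)
    then show ?thesis by linarith
  qed
qed

lemma joint_mgf:
  fixes lam eta th tau :: "nat \<Rightarrow> real"
  assumes eps: "eps > 0" and tau: "\<And>j. tau j > 0" and sm: "summable (\<lambda>j. (th j - eta j)\<^sup>2)"
    and qV: "\<And>j. j < m \<Longrightarrow> 1 - 2 * s * Vj lam tau eps j > 0"
  shows "(\<integral>\<^sup>+Y. (\<integral>\<^sup>+v. ennreal (exp (s * sqdist v th)) \<partial>posterior lam eta tau eps m Y) \<partial>data_law lam th eps)
     = ennreal (exp (s * bias th eta m) * (\<Prod>j<m. exp (s * (muj lam eta th tau eps j)\<^sup>2 / (1 - 2 * s * Vj lam tau eps j)) / sqrt (1 - 2 * s * Vj lam tau eps j)))"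
proof -
  let ?sg = "\<lambda>j. post_var lam tau eps j"
  let ?F = "\<lambda>j y. exp (s * (?sg j * (eta j / tau j + lam j * y / eps) - th j)\<^sup>2 / (1 - 2 * s * ?sg j)) / sqrt (1 - 2 * s * ?sg j)"
  have q1: "\<And>j. j < m \<Longrightarrow> 1 - 2 * s * ?sg j > 0" using q1_pos[OF eps tau qV] .
  have Fnn: "\<And>j y. j < m \<Longrightarrow> 0 \<le> ?F j y" using q1 by (auto intro!: divide_nonneg_nonneg simp: less_imp_le)
  have "(\<integral>\<^sup>+Y. (\<integral>\<^sup>+v. ennreal (exp (s * sqdist v th)) \<partial>posterior lam eta tau eps m Y) \<partial>data_law lam th eps)
     = (\<integral>\<^sup>+Y. ennreal (exp (s * bias th eta m)) * (\<Prod>j<m. ennreal (?F j (Y j))) \<partial>data_law lam th eps)"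
  proof (intro nn_integral_cong)
    fix Y :: "nat \<Rightarrow> real"
    have "(\<integral>\<^sup>+v. ennreal (exp (s * sqdist v th)) \<partial>posterior lam eta tau eps m Y)
      = ennreal (exp (s * bias th eta m) * (\<Prod>j<m. ?F j (Y j)))"
      by (subst post_mgf[OF eps tau sm q1]) (auto simp: post_mean_def)
    also have "\<dots> = ennreal (exp (s * bias th eta m)) * (\<Prod>j<m. ennreal (?F j (Y j)))"
      using Fnn by (subst prod_ennreal) (auto intro!: ennreal_mult prod_nonneg)
    finally show "(\<integral>\<^sup>+v. ennreal (exp (s * sqdist v th)) \<partial>posterior lam eta tau eps m Y)
      = ennreal (exp (s * bias th eta m)) * (\<Prod>j<m. ennreal (?F j (Y j)))" .
  qed
  also have "\<dots> = ennreal (exp (s * bias th eta m)) * (\<integral>\<^sup>+Y. (\<Prod>j<m. ennreal (?F j (Y j))) \<partial>data_law lam th eps)"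
    unfolding data_law_def by (rule nn_integral_cmult) measurable
  also have "(\<integral>\<^sup>+Y. (\<Prod>j<m. ennreal (?F j (Y j))) \<partial>data_law lam th eps)
     = (\<Prod>j<m. integral\<^sup>N (gauss (lam j * th j) eps) (\<lambda>y. ennreal (?F j y)))"
    unfolding data_law_def
    by (rule nn_integral_PiM_prod_finite[where f="\<lambda>j y. ennreal (?F j y)", OF prob_space_gauss[OF eps]]) auto
  also have "\<dots> = (\<Prod>j<m. ennreal (exp (s * (muj lam eta th tau eps j)\<^sup>2 / (1 - 2 * s * Vj lam tau eps j)) / sqrt (1 - 2 * s * Vj lam tau eps j)))"
  proof (rule prod.cong[OF refl])
    fix j assume "j \<in> {..<m}"
    then have j: "j < m" by simp
    show "integral\<^sup>N (gauss (lam j * th j) eps) (\<lambda>y. ennreal (?F j y)) = ennreal (exp (s * (muj lam eta th tau eps j)\<^sup>2 / (1 - 2 * s * Vj lam tau eps j)) / sqrt (1 - 2 * s * Vj lam tau eps j))"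
      by (rule coord_mgf[OF eps tau _ _ _ qV[OF j]]) (simp_all add: post_var_def Vj_def muj_def)
  qed
  also have "\<dots> = ennreal (\<Prod>j<m. exp (s * (muj lam eta th tau eps j)\<^sup>2 / (1 - 2 * s * Vj lam tau eps j)) / sqrt (1 - 2 * s * Vj lam tau eps j))"
    using qV by (intro prod_ennreal divide_nonneg_nonneg) (auto simp: less_imp_le)
  finally show ?thesis using qV by (subst ennreal_mult) (auto intro!: prod_nonneg divide_nonneg_nonneg simp: less_imp_le)
qed



lemma chernoff_pt:
  fixes f :: "'a \<Rightarrow> real"
  assumes f[measurable]: "f \<in> borel_measurable M" and A: "\<And>x. x \<in> A \<Longrightarrow> s * (f x - T) \<ge> 0"
  shows "emeasure M A \<le> ennreal (exp (- s * T)) * (\<integral>\<^sup>+x. ennreal (exp (s * f x)) \<partial>M)"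
proof (cases "A \<in> sets M")
  case False then show ?thesis by (simp add: emeasure_notin_sets)
next
  case True
  have "emeasure M A = (\<integral>\<^sup>+x. indicator A x \<partial>M)" using True by simp
  also have "\<dots> \<le> (\<integral>\<^sup>+x. ennreal (exp (- s * T)) * ennreal (exp (s * f x)) \<partial>M)"
  proof (intro nn_integral_mono)
    fix x
    have e: "ennreal (exp (- s * T)) * ennreal (exp (s * f x)) = ennreal (exp (s * (f x - T)))"
      by (simp add: ennreal_mult[symmetric] mult_exp_exp algebra_simps)
    show "indicator A x \<le> ennreal (exp (- s * T)) * ennreal (exp (s * f x))"
    proof (cases "x \<in> A")
      case True
      then have "1 \<le> exp (s * (f x - T))" using A by simp
      then show ?thesis unfolding e using True by simp
    qed (simp)
  qed
  also have "\<dots> = ennreal (exp (- s * T)) * (\<integral>\<^sup>+x. ennreal (exp (s * f x)) \<partial>M)"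
    by (rule nn_integral_cmult) measurable
  finally show ?thesis .
qed

lemma tail_bound:
  fixes lam eta th tau :: "nat \<Rightarrow> real"
  assumes eps: "eps > 0" and tau: "\<And>j. tau j > 0" and sm: "summable (\<lambda>j. (th j - eta j)\<^sup>2)"
    and qV: "\<And>j. j < m \<Longrightarrow> 1 - 2 * s * Vj lam tau eps j > 0"
    and A: "\<And>v. v \<in> A \<Longrightarrow> s * (sqdist v th - T) \<ge> 0"
  shows "(\<integral>\<^sup>+Y. emeasure (posterior lam eta tau eps m Y) A \<partial>data_law lam th eps)
     \<le> ennreal (exp (- s * T) * (exp (s * bias th eta m) * (\<Prod>j<m. exp (s * (muj lam eta th tau eps j)\<^sup>2 / (1 - 2 * s * Vj lam tau eps j)) / sqrt (1 - 2 * s * Vj lam tau eps j))))"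
proof -
  have q1: "\<And>j. j < m \<Longrightarrow> 1 - 2 * s * post_var lam tau eps j > 0" using q1_pos[OF eps tau qV] .
  have meas: "(\<lambda>Y. \<integral>\<^sup>+v. ennreal (exp (s * sqdist v th)) \<partial>posterior lam eta tau eps m Y) \<in> borel_measurable (data_law lam th eps)"
  proof (subst measurable_cong)
    fix Y
    show "(\<integral>\<^sup>+v. ennreal (exp (s * sqdist v th)) \<partial>posterior lam eta tau eps m Y) = ennreal (exp (s * bias th eta m) * (\<Prod>j<m. exp (s * (post_mean lam eta tau eps Y j - th j)\<^sup>2 / (1 - 2 * s * post_var lam tau eps j)) / sqrt (1 - 2 * s * post_var lam tau eps j)))"
      by (rule post_mgf[OF eps tau sm q1])
  next
    show "(\<lambda>Y. ennreal (exp (s * bias th eta m) * (\<Prod>j<m. exp (s * (post_mean lam eta tau eps Y j - th j)\<^sup>2 / (1 - 2 * s * post_var lam tau eps j)) / sqrt (1 - 2 * s * post_var lam tau eps j)))) \<in> borel_measurable (data_law lam th eps)"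
      unfolding data_law_def post_mean_def by measurable
  qed
  have "(\<integral>\<^sup>+Y. emeasure (posterior lam eta tau eps m Y) A \<partial>data_law lam th eps)
     \<le> (\<integral>\<^sup>+Y. ennreal (exp (- s * T)) * (\<integral>\<^sup>+v. ennreal (exp (s * sqdist v th)) \<partial>posterior lam eta tau eps m Y) \<partial>data_law lam th eps)"
  proof (intro nn_integral_mono chernoff_pt A)
    fix Y show "(\<lambda>v. sqdist v th) \<in> borel_measurable (posterior lam eta tau eps m Y)"
      unfolding sqdist_def posterior_def by measurable
  qed
  also have "\<dots> = ennreal (exp (- s * T)) * (\<integral>\<^sup>+Y. (\<integral>\<^sup>+v. ennreal (exp (s * sqdist v th)) \<partial>posterior lam eta tau eps m Y) \<partial>data_law lam th eps)"
    by (rule nn_integral_cmult[OF meas])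
  also have "\<dots> = ennreal (exp (- s * T)) * ennreal (exp (s * bias th eta m) * (\<Prod>j<m. exp (s * (muj lam eta th tau eps j)\<^sup>2 / (1 - 2 * s * Vj lam tau eps j)) / sqrt (1 - 2 * s * Vj lam tau eps j)))"
    by (simp only: joint_mgf[OF eps tau sm qV])
  also have "\<dots> = ennreal (exp (- s * T) * (exp (s * bias th eta m) * (\<Prod>j<m. exp (s * (muj lam eta th tau eps j)\<^sup>2 / (1 - 2 * s * Vj lam tau eps j)) / sqrt (1 - 2 * s * Vj lam tau eps j))))"
    by (rule ennreal_mult'[symmetric]) simp
  finally show ?thesis .
qed



lemma E1: fixes x :: real assumes "0 \<le> x" "x \<le> 1/2" shows "1 / sqrt (1 - x) \<le> exp x"
proof -
  have "1 + 2 * x \<le> exp (2 * x)" using exp_ge_add_one_self by simp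
  then have "(1 + 2 * x) * (1 - x) \<le> exp (2 * x) * (1 - x)" using assms by (intro mult_right_mono) auto
  moreover have "1 \<le> (1 + 2 * x) * (1 - x)"
  proof -
    have "0 \<le> x * (1 - 2 * x)" using assms by (intro mult_nonneg_nonneg) auto
    moreover have "(1 + 2 * x) * (1 - x) = 1 + x * (1 - 2 * x)" by algebra
    ultimately show ?thesis by linarith
  qed
  ultimately have "1 \<le> exp (2 * x) * (1 - x)" by linarith
  then have "1 / (1 - x) \<le> exp (2 * x)" using assms by (simp add: divide_le_eq)
  then have "sqrt (1 / (1 - x)) \<le> sqrt (exp (2 * x))" by simp
  also have "sqrt (exp (2 * x)) = exp x"
  proof -
    have "exp (2 * x) = (exp x)\<^sup>2" by (simp add: power2_eq_square mult_exp_exp)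
    then show ?thesis by (simp add: real_sqrt_abs)
  qed
  finally show ?thesis by (simp add: real_sqrt_divide)
qed

lemma E2: fixes x :: real assumes "0 \<le> x" "x \<le> 1" shows "1 / sqrt (1 + x) \<le> exp (- x / 2 + x\<^sup>2 / 2)"
proof -
  have "x - x\<^sup>2 \<le> ln (1 + x)" by (rule ln_one_plus_pos_lower_bound[OF assms])
  then have "exp (x - x\<^sup>2) \<le> 1 + x" using assms by (metis exp_le_cancel_iff exp_ln add_pos_nonneg zero_less_one)
  then have "1 / (1 + x) \<le> 1 / exp (x - x\<^sup>2)" using assms by (intro divide_left_mono) auto
  moreover have "exp (- (x - x\<^sup>2)) = 1 / exp (x - x\<^sup>2)" by (subst exp_minus) (simp add: inverse_eq_divide)
  ultimately have "1 / (1 + x) \<le> exp (- (x - x\<^sup>2))" by simp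
  then have "sqrt (1 / (1 + x)) \<le> sqrt (exp (- (x - x\<^sup>2)))" by simp
  also have "sqrt (exp (- (x - x\<^sup>2))) = exp (- x / 2 + x\<^sup>2 / 2)"
  proof -
    have "exp (- (x - x\<^sup>2)) = exp (- x / 2 + x\<^sup>2 / 2) * exp (- x / 2 + x\<^sup>2 / 2)"
      by (simp only: mult_exp_exp) (simp add: field_simps)
    then show ?thesis by simp
  qed
  finally show ?thesis by (simp add: real_sqrt_divide)
qed



lemma upper_real:
  fixes a V mu dl :: "nat \<Rightarrow> real" and m :: nat and b Ph L K d D s :: real
  assumes m: "m \<ge> 1" and Ph: "Ph > 0" and L: "L \<ge> 1" and KL: "K \<ge> L" and KD: "L * D / d\<^sup>2 \<le> K"
   and a_pos: "\<And>j. j < m \<Longrightarrow> a j > 0"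
   and V_le: "\<And>j. j < m \<Longrightarrow> V j \<le> 2 * a j" and V_nn: "\<And>j. j < m \<Longrightarrow> V j \<ge> 0"
   and mu_le: "\<And>j. j < m \<Longrightarrow> (mu j)\<^sup>2 \<le> a j * (dl j)\<^sup>2 / d\<^sup>2"
   and sa: "(\<Sum>j<m. a j) \<le> Ph" and amax: "\<And>j. j < m \<Longrightarrow> a j \<le> L * Ph / m"
   and sD: "(\<Sum>j<m. (dl j)\<^sup>2) \<le> D" and b: "b \<le> Ph"
   and s_def: "s = m / (8 * L * Ph)"
  shows "\<forall>j<m. 1 - 2 * s * V j > 0"
    and "exp (- s * ((4 + 11 / 2 * K) * Ph)) * (exp (s * b) * (\<Prod>j<m. exp (s * (mu j)\<^sup>2 / (1 - 2 * s * V j)) / sqrt (1 - 2 * s * V j))) \<le> 2 * exp (- (real m / 36))"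
proof -
  have s: "s > 0" using s_def m Ph L by simp
  have sLP: "4 * s * (L * Ph / m) = 1/2" using s_def m Ph L by (simp add: field_simps)
  have x_le: "2 * s * V j \<le> 1/2" if j: "j < m" for j
  proof -
    have "2 * s * V j \<le> 2 * s * (2 * (L * Ph / m))"
      using s V_le[OF j] amax[OF j] by (intro mult_left_mono) auto
    moreover have "2 * s * (2 * (L * Ph / m)) = 4 * s * (L * Ph / m)" by simp
    ultimately show ?thesis using sLP by linarith
  qed
  have x_nn: "0 \<le> 2 * s * V j" if "j < m" for j using s V_nn[OF that] by simp
  show "\<forall>j<m. 1 - 2 * s * V j > 0" using x_le by fastforce
  have fac: "exp (s * (mu j)\<^sup>2 / (1 - 2 * s * V j)) / sqrt (1 - 2 * s * V j) \<le> exp (2 * s * (mu j)\<^sup>2 + 2 * s * V j)"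
    if j: "j < m" for j
  proof -
    have q: "1 - 2 * s * V j \<ge> 1/2" using x_le[OF j] by simp
    have "s * (mu j)\<^sup>2 / (1 - 2 * s * V j) \<le> s * (mu j)\<^sup>2 / (1/2)"
      using q s by (intro divide_left_mono) auto
    then have e1: "exp (s * (mu j)\<^sup>2 / (1 - 2 * s * V j)) \<le> exp (2 * s * (mu j)\<^sup>2)" by simp
    have e2: "1 / sqrt (1 - 2 * s * V j) \<le> exp (2 * s * V j)" using E1 x_nn[OF j] x_le[OF j] by blast
    have "exp (s * (mu j)\<^sup>2 / (1 - 2 * s * V j)) / sqrt (1 - 2 * s * V j)
       = exp (s * (mu j)\<^sup>2 / (1 - 2 * s * V j)) * (1 / sqrt (1 - 2 * s * V j))" by simp
    also have "\<dots> \<le> exp (2 * s * (mu j)\<^sup>2) * exp (2 * s * V j)"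
      using e1 e2 q by (intro mult_mono) auto
    finally show ?thesis by (simp add: mult_exp_exp)
  qed
  have P: "(\<Prod>j<m. exp (s * (mu j)\<^sup>2 / (1 - 2 * s * V j)) / sqrt (1 - 2 * s * V j))
      \<le> exp (\<Sum>j<m. 2 * s * (mu j)\<^sup>2 + 2 * s * V j)"
  proof -
    have "(\<Prod>j<m. exp (s * (mu j)\<^sup>2 / (1 - 2 * s * V j)) / sqrt (1 - 2 * s * V j))
      \<le> (\<Prod>j<m. exp (2 * s * (mu j)\<^sup>2 + 2 * s * V j))"
    proof (intro prod_mono conjI)
      fix j assume "j \<in> {..<m}" then have j: "j < m" by simp
      show "0 \<le> exp (s * (mu j)\<^sup>2 / (1 - 2 * s * V j)) / sqrt (1 - 2 * s * V j)"
        using x_le[OF j] by (intro divide_nonneg_nonneg) auto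
      show "exp (s * (mu j)\<^sup>2 / (1 - 2 * s * V j)) / sqrt (1 - 2 * s * V j) \<le> exp (2 * s * (mu j)\<^sup>2 + 2 * s * V j)"
        by (rule fac[OF j])
    qed
    also have "\<dots> = exp (\<Sum>j<m. 2 * s * (mu j)\<^sup>2 + 2 * s * V j)" by (simp add: exp_sum)
    finally show ?thesis .
  qed
  have D0: "0 \<le> D" using sD by (meson order_trans sum_nonneg zero_le_power2)
  have smu: "(\<Sum>j<m. (mu j)\<^sup>2) \<le> K * Ph"
  proof -
    have "(\<Sum>j<m. (mu j)\<^sup>2) \<le> (\<Sum>j<m. (L * Ph / m) * (dl j)\<^sup>2 / d\<^sup>2)"
    proof (rule sum_mono)
      fix j assume "j \<in> {..<m}" then have j: "j < m" by simp
      have "a j * (dl j)\<^sup>2 / d\<^sup>2 \<le> (L * Ph / m) * (dl j)\<^sup>2 / d\<^sup>2"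
        using amax[OF j] by (intro divide_right_mono mult_right_mono) auto
      then show "(mu j)\<^sup>2 \<le> (L * Ph / m) * (dl j)\<^sup>2 / d\<^sup>2" using mu_le[OF j] by linarith
    qed
    also have "\<dots> = (L * Ph / m) / d\<^sup>2 * (\<Sum>j<m. (dl j)\<^sup>2)" by (simp add: sum_distrib_left sum_divide_distrib)
    also have "\<dots> \<le> (L * Ph / m) / d\<^sup>2 * D" using sD Ph L by (intro mult_left_mono) auto
    also have "\<dots> \<le> (L * Ph) / d\<^sup>2 * D"
    proof -
      have m1: "1 \<le> real m" using m by simp
      have LP: "0 \<le> L * Ph" using L Ph by simp
      have "L * Ph * 1 \<le> L * Ph * real m" by (rule mult_left_mono[OF m1 LP])
      then have "L * Ph / m \<le> L * Ph" using m1 by (simp add: divide_le_eq)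
      then show ?thesis using D0 by (intro mult_right_mono divide_right_mono) auto
    qed
    also have "\<dots> = Ph * (L * D / d\<^sup>2)" by simp
    also have "\<dots> \<le> Ph * K" using KD Ph by (intro mult_left_mono) auto
    finally show ?thesis by (simp add: mult.commute)
  qed
  have sV: "(\<Sum>j<m. V j) \<le> 2 * Ph"
  proof -
    have "(\<Sum>j<m. V j) \<le> (\<Sum>j<m. 2 * a j)" using V_le by (intro sum_mono) auto
    also have "\<dots> \<le> 2 * Ph" using sa by (simp add: sum_distrib_left[symmetric])
    finally show ?thesis .
  qed
  have ssum: "(\<Sum>j<m. 2 * s * (mu j)\<^sup>2 + 2 * s * V j) = 2 * s * (\<Sum>j<m. (mu j)\<^sup>2) + 2 * s * (\<Sum>j<m. V j)"
    by (simp add: sum.distrib sum_distrib_left)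
  have E: "- s * ((4 + 11 / 2 * K) * Ph) + s * b + (\<Sum>j<m. 2 * s * (mu j)\<^sup>2 + 2 * s * V j) \<le> s * (Ph * (1 - 7/2 * K))"
  proof -
    have "- s * ((4 + 11 / 2 * K) * Ph) + s * b + (\<Sum>j<m. 2 * s * (mu j)\<^sup>2 + 2 * s * V j)
       = s * (- ((4 + 11 / 2 * K) * Ph) + b + 2 * (\<Sum>j<m. (mu j)\<^sup>2) + 2 * (\<Sum>j<m. V j))"
      unfolding ssum by (simp add: algebra_simps)
    also have "\<dots> \<le> s * (Ph * (1 - 7/2 * K))"
    proof (rule mult_left_mono)
      have e1: "(4 + 11 / 2 * K) * Ph = 4 * Ph + 11/2 * (K * Ph)" by (simp add: algebra_simps)
      have e2: "Ph * (1 - 7/2 * K) = Ph - 7/2 * (K * Ph)" by (simp add: algebra_simps)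
      show "- ((4 + 11 / 2 * K) * Ph) + b + 2 * (\<Sum>j<m. (mu j)\<^sup>2) + 2 * (\<Sum>j<m. V j) \<le> Ph * (1 - 7/2 * K)"
        unfolding e1 e2 using b smu sV by linarith
    qed (use s in simp)
    finally show ?thesis .
  qed
  have F: "s * (Ph * (1 - 7/2 * K)) \<le> - (real m / 36)"
  proof -
    have "s * Ph = m / (8 * L)" using s_def Ph L by simp
    have "1 - 7/2 * K \<le> - 5/2 * L" using KL L by simp
    then have "s * Ph * (1 - 7/2 * K) \<le> s * Ph * (- 5/2 * L)"
      using s Ph by (intro mult_left_mono) auto
    also have "\<dots> = - 5/16 * m" using \<open>s * Ph = m / (8 * L)\<close> L by (simp add: field_simps)
    also have "\<dots> \<le> - (real m / 36)" by simp
    finally show ?thesis by (simp add: mult.assoc)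
  qed
  have "exp (- s * ((4 + 11 / 2 * K) * Ph)) * (exp (s * b) * (\<Prod>j<m. exp (s * (mu j)\<^sup>2 / (1 - 2 * s * V j)) / sqrt (1 - 2 * s * V j)))
     \<le> exp (- s * ((4 + 11 / 2 * K) * Ph)) * (exp (s * b) * exp (\<Sum>j<m. 2 * s * (mu j)\<^sup>2 + 2 * s * V j))"
    using P by (intro mult_left_mono) auto
  also have "\<dots> = exp (- s * ((4 + 11 / 2 * K) * Ph) + s * b + (\<Sum>j<m. 2 * s * (mu j)\<^sup>2 + 2 * s * V j))"
    by (simp add: mult_exp_exp)
  also have "\<dots> \<le> exp (- (real m / 36))" using E F by simp
  also have "\<dots> \<le> 2 * exp (- (real m / 36))" by simp
  finally show "exp (- s * ((4 + 11 / 2 * K) * Ph)) * (exp (s * b) * (\<Prod>j<m. exp (s * (mu j)\<^sup>2 / (1 - 2 * s * V j)) / sqrt (1 - 2 * s * V j))) \<le> 2 * exp (- (real m / 36))" .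
qed



lemma aux_q: "(q::real) > 0 \<Longrightarrow> 8 * c * K * (c * m / 2 / q) = 4 * c\<^sup>2 * m * (K / q)"
  by (simp add: field_simps power2_eq_square)

lemma lower_real:
  fixes a V mu :: "nat \<Rightarrow> real" and m :: nat and b Ph L K d c s :: real
  assumes m: "m \<ge> 1" and Ph: "Ph > 0" and L: "L \<ge> 1" and d: "d > 0" and KL: "(1 + 1/d) * L \<le> K"
   and c: "c > 0" "c < 1 / (8 * K)"
   and a_pos: "\<And>j. j < m \<Longrightarrow> a j > 0"
   and V_le: "\<And>j. j < m \<Longrightarrow> V j \<le> 2 * a j" and V_ge: "\<And>j. j < m \<Longrightarrow> a j / (1 + 1/d) \<le> V j"
   and Phm: "Ph = max b (\<Sum>j<m. a j)" and b0: "b \<ge> 0"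
   and amax: "\<And>j. j < m \<Longrightarrow> a j \<le> L * Ph / m"
   and s_def: "s = - (c * m / (2 * Ph))"
  shows "\<forall>j<m. 1 - 2 * s * V j > 0"
    and "exp (- s * ((1 - 8 * c * K) / (1 + 1 / d) * Ph)) * (exp (s * b) * (\<Prod>j<m. exp (s * (mu j)\<^sup>2 / (1 - 2 * s * V j)) / sqrt (1 - 2 * s * V j))) \<le> 2 * exp (- (c\<^sup>2 * real m / 2))"
proof -
  define r where "r = c * m / (2 * Ph)"
  have r: "r > 0" using r_def c m Ph by simp
  have sr: "s = - r" using s_def r_def by simp
  have rPh: "r * Ph = c * m / 2" using r_def Ph by simp
  have d1: "1/d > 0" using d by simp
  have dd: "1 + 1/d > 0" "1 + 1/d \<ge> 1" using d1 by linarith+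
  have K: "K \<ge> L"
  proof -
    have "1 * L \<le> (1 + 1/d) * L" using dd L by (intro mult_right_mono) auto
    then show ?thesis using KL by linarith
  qed
  have K0: "K > 0" using K L by simp
  have cL: "2 * c * L \<le> 1"
  proof -
    have "c * (8 * K) < 1" using c K0 by (simp add: less_divide_eq)
    moreover have "c * (8 * L) \<le> c * (8 * K)" using K c by simp
    ultimately have "c * (8 * L) < 1" by linarith
    then have h: "8 * (c * L) < 1" by (simp add: algebra_simps)
    have "0 \<le> c * L" using c L by simp
    have "2 * c * L = 2 * (c * L)" by simp
    then show ?thesis using h \<open>0 \<le> c * L\<close> by linarith
  qed
  have V_nn: "V j \<ge> 0" if "j < m" for j
  proof -
    have "a j / (1 + 1/d) > 0" using a_pos[OF that] dd(1) by (rule divide_pos_pos)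
    then show ?thesis using V_ge[OF that] by linarith
  qed
  have x_le: "2 * r * V j \<le> 1" if j: "j < m" for j
  proof -
    have "2 * r * V j \<le> 2 * r * (2 * (L * Ph / m))"
      using r V_le[OF j] amax[OF j] by (intro mult_left_mono) auto
    also have "\<dots> = 2 * c * L" using r_def m Ph by (simp add: field_simps)
    finally show ?thesis using cL by simp
  qed
  have x_nn: "0 \<le> 2 * r * V j" if "j < m" for j using r V_nn[OF that] by simp
  show "\<forall>j<m. 1 - 2 * s * V j > 0" using x_nn sr by fastforce
  have fac: "exp (s * (mu j)\<^sup>2 / (1 - 2 * s * V j)) / sqrt (1 - 2 * s * V j) \<le> exp (- r * V j + 2 * r\<^sup>2 * (V j)\<^sup>2)"
    if j: "j < m" for j
  proof -
    have q: "1 - 2 * s * V j = 1 + 2 * r * V j" using sr by simp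
    have "s * (mu j)\<^sup>2 / (1 - 2 * s * V j) \<le> 0"
      unfolding q sr using r x_nn[OF j] by (intro divide_nonpos_nonneg) auto
    then have e1: "exp (s * (mu j)\<^sup>2 / (1 - 2 * s * V j)) \<le> 1" by simp
    have e2: "1 / sqrt (1 - 2 * s * V j) \<le> exp (- (2 * r * V j) / 2 + (2 * r * V j)\<^sup>2 / 2)"
      unfolding q using E2 x_nn[OF j] x_le[OF j] by blast
    have "exp (s * (mu j)\<^sup>2 / (1 - 2 * s * V j)) / sqrt (1 - 2 * s * V j)
       = exp (s * (mu j)\<^sup>2 / (1 - 2 * s * V j)) * (1 / sqrt (1 - 2 * s * V j))" by simp
    also have "\<dots> \<le> 1 * exp (- (2 * r * V j) / 2 + (2 * r * V j)\<^sup>2 / 2)"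
      using e1 e2 x_nn[OF j] unfolding q by (intro mult_mono) auto
    also have "- (2 * r * V j) / 2 + (2 * r * V j)\<^sup>2 / 2 = - r * V j + 2 * r\<^sup>2 * (V j)\<^sup>2"
      by (simp add: power2_eq_square)
    finally show ?thesis by simp
  qed
  have P: "(\<Prod>j<m. exp (s * (mu j)\<^sup>2 / (1 - 2 * s * V j)) / sqrt (1 - 2 * s * V j))
      \<le> exp (\<Sum>j<m. - r * V j + 2 * r\<^sup>2 * (V j)\<^sup>2)"
  proof -
    have "(\<Prod>j<m. exp (s * (mu j)\<^sup>2 / (1 - 2 * s * V j)) / sqrt (1 - 2 * s * V j))
      \<le> (\<Prod>j<m. exp (- r * V j + 2 * r\<^sup>2 * (V j)\<^sup>2))"
    proof (intro prod_mono conjI)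
      fix j assume "j \<in> {..<m}" then have j: "j < m" by simp
      show "0 \<le> exp (s * (mu j)\<^sup>2 / (1 - 2 * s * V j)) / sqrt (1 - 2 * s * V j)"
        using x_nn[OF j] sr by (intro divide_nonneg_nonneg) auto
      show "exp (s * (mu j)\<^sup>2 / (1 - 2 * s * V j)) / sqrt (1 - 2 * s * V j) \<le> exp (- r * V j + 2 * r\<^sup>2 * (V j)\<^sup>2)"
        by (rule fac[OF j])
    qed
    also have "\<dots> = exp (\<Sum>j<m. - r * V j + 2 * r\<^sup>2 * (V j)\<^sup>2)" by (simp add: exp_sum)
    finally show ?thesis .
  qed
  have sa: "(\<Sum>j<m. a j) \<le> Ph" using Phm by simp
  have sV: "(\<Sum>j<m. V j) \<le> 2 * Ph"
  proof -
    have "(\<Sum>j<m. V j) \<le> (\<Sum>j<m. 2 * a j)" using V_le by (intro sum_mono) auto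
    also have "\<dots> \<le> 2 * Ph" using sa by (simp add: sum_distrib_left[symmetric])
    finally show ?thesis .
  qed
  have sV2: "(\<Sum>j<m. (V j)\<^sup>2) \<le> 4 * L * Ph\<^sup>2 / m"
  proof -
    have "(\<Sum>j<m. (V j)\<^sup>2) \<le> (\<Sum>j<m. (2 * (L * Ph / m)) * V j)"
    proof (rule sum_mono)
      fix j assume "j \<in> {..<m}" then have j: "j < m" by simp
      have "V j \<le> 2 * (L * Ph / m)" using V_le[OF j] amax[OF j] by simp
      then show "(V j)\<^sup>2 \<le> (2 * (L * Ph / m)) * V j"
        unfolding power2_eq_square using V_nn[OF j] by (intro mult_right_mono) auto
    qed
    also have "\<dots> = (2 * (L * Ph / m)) * (\<Sum>j<m. V j)" by (simp add: sum_distrib_left)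
    also have "\<dots> \<le> (2 * (L * Ph / m)) * (2 * Ph)" using sV L Ph by (intro mult_left_mono) auto
    also have "\<dots> = 4 * L * Ph\<^sup>2 / m" by (simp add: power2_eq_square)
    finally show ?thesis .
  qed
  have bV: "Ph / (1 + 1/d) \<le> b + (\<Sum>j<m. V j)"
  proof -
    have sVa: "(\<Sum>j<m. a j) / (1 + 1/d) \<le> (\<Sum>j<m. V j)"
      unfolding sum_divide_distrib using V_ge by (intro sum_mono) auto
    have sV0: "0 \<le> (\<Sum>j<m. V j)" using V_nn by (intro sum_nonneg) auto
    show ?thesis
    proof (cases "b \<le> (\<Sum>j<m. a j)")
      case True then show ?thesis using Phm sVa b0 by simp
    next
      case False
      then have "Ph = b" using Phm by simp
      moreover have "b / (1 + 1/d) \<le> b"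
      proof -
        have "b * 1 \<le> b * (1 + 1/d)" using b0 dd by (intro mult_left_mono) auto
        then show ?thesis by (subst pos_divide_le_eq[OF dd(1)]) simp
      qed
      ultimately show ?thesis using sV0 by simp
    qed
  qed
  define Pp where "Pp = Ph / (1 + 1/d)"
  have E: "- s * ((1 - 8 * c * K) / (1 + 1 / d) * Ph) + s * b + (\<Sum>j<m. - r * V j + 2 * r\<^sup>2 * (V j)\<^sup>2)
      \<le> - 8 * c * K * (r * Pp) + 2 * r\<^sup>2 * (4 * L * Ph\<^sup>2 / m)"
  proof -
    have ssum: "(\<Sum>j<m. - r * V j + 2 * r\<^sup>2 * (V j)\<^sup>2) = - r * (\<Sum>j<m. V j) + 2 * r\<^sup>2 * (\<Sum>j<m. (V j)\<^sup>2)"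
      by (simp only: sum.distrib sum_distrib_left[symmetric] mult_minus_left sum_negf)
    have T: "(1 - 8 * c * K) / (1 + 1 / d) * Ph = Pp - 8 * c * K * Pp" 
    proof -
      have "(1 - 8 * c * K) / (1 + 1 / d) * Ph = (1 - 8 * c * K) * (Ph / (1 + 1 / d))" by simp
      then show ?thesis unfolding Pp_def by (simp only: left_diff_distrib mult_1)
    qed
    have "- s * ((1 - 8 * c * K) / (1 + 1 / d) * Ph) + s * b + (\<Sum>j<m. - r * V j + 2 * r\<^sup>2 * (V j)\<^sup>2)
       = r * Pp - 8 * c * K * (r * Pp) - r * (b + (\<Sum>j<m. V j)) + 2 * r\<^sup>2 * (\<Sum>j<m. (V j)\<^sup>2)"
      unfolding ssum T sr by (simp add: algebra_simps)
    also have "\<dots> \<le> r * Pp - 8 * c * K * (r * Pp) - r * Pp + 2 * r\<^sup>2 * (4 * L * Ph\<^sup>2 / m)"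
    proof -
      have "r * Pp \<le> r * (b + (\<Sum>j<m. V j))" using bV r unfolding Pp_def by (intro mult_left_mono) auto
      moreover have "2 * r\<^sup>2 * (\<Sum>j<m. (V j)\<^sup>2) \<le> 2 * r\<^sup>2 * (4 * L * Ph\<^sup>2 / m)" using sV2 by (intro mult_left_mono) auto
      ultimately show ?thesis by linarith
    qed
    finally show ?thesis by simp
  qed
  have F: "- 8 * c * K * (r * Pp) + 2 * r\<^sup>2 * (4 * L * Ph\<^sup>2 / m) \<le> - (c\<^sup>2 * real m / 2)"
  proof -
    have rPp: "r * Pp = c * m / 2 / (1 + 1/d)"
    proof -
      have "r * Pp = (r * Ph) / (1 + 1/d)" unfolding Pp_def by simp
      then show ?thesis by (simp only: rPh)
    qed
    have t1: "8 * c * K * (r * Pp) \<ge> 4 * c\<^sup>2 * m * L"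
    proof -
      have "8 * c * K * (r * Pp) = 4 * c\<^sup>2 * m * (K / (1 + 1/d))" unfolding rPp by (rule aux_q[OF dd(1)])
      moreover have "L \<le> K / (1 + 1/d)" by (subst pos_le_divide_eq[OF dd(1)]) (use KL in \<open>simp add: mult.commute\<close>)
      moreover have "0 \<le> 4 * c\<^sup>2 * m" by simp
      ultimately show ?thesis by (metis mult_left_mono)
    qed
    have t2: "2 * r\<^sup>2 * (4 * L * Ph\<^sup>2 / m) = 2 * c\<^sup>2 * m * L"
    proof -
      have "2 * r\<^sup>2 * (4 * L * Ph\<^sup>2 / m) = 8 * L * (r * Ph)\<^sup>2 / m" by (simp add: power2_eq_square field_simps)
      also have "\<dots> = 2 * c\<^sup>2 * m * L" unfolding rPh using m by (simp add: power2_eq_square field_simps)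
      finally show ?thesis .
    qed
    have "2 * c\<^sup>2 * m * L \<ge> c\<^sup>2 * m / 2"
    proof -
      have "c\<^sup>2 * m * (1/4) \<le> c\<^sup>2 * m * L" using L by (intro mult_left_mono) auto
      then show ?thesis by simp
    qed
    have lin: "\<And>A B C X::real. A \<le> 2 * X \<Longrightarrow> 4 * X \<le> B \<Longrightarrow> C = 2 * X \<Longrightarrow> - B + C \<le> - A" by linarith
    have e1: "4 * c\<^sup>2 * m * L = 4 * (c\<^sup>2 * m * L)" "2 * c\<^sup>2 * m * L = 2 * (c\<^sup>2 * m * L)"
      "- 8 * c * K * (r * Pp) = - (8 * c * K * (r * Pp))" by simp_all
    show ?thesis unfolding e1(3) by (rule lin) (use \<open>2 * c\<^sup>2 * m * L \<ge> c\<^sup>2 * m / 2\<close> t1 t2 e1 in simp_all)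
  qed
  have "exp (- s * ((1 - 8 * c * K) / (1 + 1 / d) * Ph)) * (exp (s * b) * (\<Prod>j<m. exp (s * (mu j)\<^sup>2 / (1 - 2 * s * V j)) / sqrt (1 - 2 * s * V j)))
     \<le> exp (- s * ((1 - 8 * c * K) / (1 + 1 / d) * Ph)) * (exp (s * b) * exp (\<Sum>j<m. - r * V j + 2 * r\<^sup>2 * (V j)\<^sup>2))"
    using P by (intro mult_left_mono) auto
  also have "\<dots> = exp (- s * ((1 - 8 * c * K) / (1 + 1 / d) * Ph) + s * b + (\<Sum>j<m. - r * V j + 2 * r\<^sup>2 * (V j)\<^sup>2))"
    by (simp add: mult_exp_exp)
  also have "\<dots> \<le> exp (- (c\<^sup>2 * real m / 2))" using E F by simp
  also have "\<dots> \<le> 2 * exp (- (c\<^sup>2 * real m / 2))" by simp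
  finally show "exp (- s * ((1 - 8 * c * K) / (1 + 1 / d) * Ph)) * (exp (s * b) * (\<Prod>j<m. exp (s * (mu j)\<^sup>2 / (1 - 2 * s * V j)) / sqrt (1 - 2 * s * V j))) \<le> 2 * exp (- (c\<^sup>2 * real m / 2))" .
qed



lemma post_var_le: assumes eps: "eps > 0" and t: "tau j > 0" and l: "lam j \<noteq> 0"
  shows "post_var lam tau eps j \<le> eps * Lam lam j"
proof -
  have l2: "(lam j)\<^sup>2 > 0" using l by simp
  have "(lam j)\<^sup>2 / eps \<le> (lam j)\<^sup>2 / eps + 1 / tau j" using t by simp
  moreover have "(lam j)\<^sup>2 / eps > 0" using l2 eps by simp
  moreover have "(lam j)\<^sup>2 / eps + 1 / tau j > 0" using l2 eps t by (intro add_pos_pos) auto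
  ultimately have P: "0 < ((lam j)\<^sup>2 / eps + 1 / tau j) * ((lam j)\<^sup>2 / eps)" by (intro mult_pos_pos)
  have "1 / ((lam j)\<^sup>2 / eps + 1 / tau j) \<le> 1 / ((lam j)\<^sup>2 / eps)"
    by (rule divide_left_mono[OF \<open>(lam j)\<^sup>2 / eps \<le> (lam j)\<^sup>2 / eps + 1 / tau j\<close> _ P]) simp
  then show ?thesis unfolding post_var_def Lam_def by simp
qed

lemma Vj_le: assumes eps: "eps > 0" and t: "tau j > 0" and l: "lam j \<noteq> 0"
  shows "Vj lam tau eps j \<le> 2 * (eps * Lam lam j)"
proof -
  let ?s = "post_var lam tau eps j"
  have s0: "?s > 0" using eps t by (rule post_var_pos)
  have sa: "?s \<le> eps * Lam lam j" using eps t l by (rule post_var_le)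
  have "?s * (lam j)\<^sup>2 / eps \<le> eps * Lam lam j * (lam j)\<^sup>2 / eps"
    using sa eps by (intro divide_right_mono mult_right_mono) auto
  also have "\<dots> = 1" using l eps unfolding Lam_def by simp
  finally have h: "?s * (lam j)\<^sup>2 / eps \<le> 1" .
  have "Vj lam tau eps j = ?s * (1 + ?s * (lam j)\<^sup>2 / eps)" unfolding Vj_def by (simp add: power2_eq_square algebra_simps)
  also have "\<dots> \<le> ?s * 2" using h s0 by (intro mult_left_mono) auto
  finally show ?thesis using sa by simp
qed

lemma Vj_ge: assumes eps: "eps > 0" and t: "tau j > 0" and l: "lam j \<noteq> 0" and d: "d > 0"
   and td: "tau j \<ge> d * (eps * Lam lam j)"
  shows "eps * Lam lam j / (1 + 1/d) \<le> Vj lam tau eps j"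
proof -
  define a where "a = eps * Lam lam j"
  have a: "a > 0" unfolding a_def Lam_def using eps l by simp
  have la: "(lam j)\<^sup>2 / eps = 1 / a" unfolding a_def Lam_def by simp
  have P2: "0 < tau j * (d * a)" using t a d by simp
  have td': "d * a \<le> tau j" using td unfolding a_def .
  have "1 / tau j \<le> 1 / (d * a)" by (rule divide_left_mono[OF td' _ P2]) simp
  moreover have "1 / a + 1 / (d * a) = (1 + 1/d) / a" using a d by (simp add: field_simps)
  ultimately have le1: "(lam j)\<^sup>2 / eps + 1 / tau j \<le> (1 + 1/d) / a" unfolding la by linarith
  have p1: "(lam j)\<^sup>2 / eps + 1 / tau j > 0" unfolding la using a t by (intro add_pos_pos) auto
  have p2: "(1 + 1/d) / a > 0" using a d by (intro divide_pos_pos add_pos_pos) auto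
  have P: "0 < (1 + 1/d) / a * ((lam j)\<^sup>2 / eps + 1 / tau j)" using p1 p2 by (rule mult_pos_pos[rotated])
  have "1 / ((1 + 1/d) / a) \<le> 1 / ((lam j)\<^sup>2 / eps + 1 / tau j)" by (rule divide_left_mono[OF le1 _ P]) simp
  then have "a / (1 + 1/d) \<le> post_var lam tau eps j" unfolding post_var_def by simp
  also have "\<dots> \<le> Vj lam tau eps j" unfolding Vj_def using eps by simp
  finally show ?thesis unfolding a_def .
qed

lemma muj_le: assumes eps: "eps > 0" and t: "tau j > 0" and l: "lam j \<noteq> 0" and d: "d > 0"
   and td: "tau j \<ge> d * sqrt (eps * Lam lam j)"
  shows "(muj lam eta th tau eps j)\<^sup>2 \<le> eps * Lam lam j * (th j - eta j)\<^sup>2 / d\<^sup>2"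
proof -
  define a where "a = eps * Lam lam j"
  have a: "a > 0" unfolding a_def Lam_def using eps l by simp
  let ?s = "post_var lam tau eps j"
  have s0: "?s > 0" using eps t by (rule post_var_pos)
  have sa: "?s \<le> a" unfolding a_def using eps t l by (rule post_var_le)
  have "?s / tau j \<le> a / (d * sqrt a)"
  proof -
    have "?s / tau j \<le> a / tau j" using sa t by (intro divide_right_mono) auto
    also have "\<dots> \<le> a / (d * sqrt a)"
    proof -
      have P3: "0 < tau j * (d * sqrt a)" using t a d by simp
      have td': "d * sqrt a \<le> tau j" using td unfolding a_def .
      show ?thesis by (rule divide_left_mono[OF td' _ P3]) (use a in simp)
    qed
    finally show ?thesis .
  qed
  also have "a / (d * sqrt a) = sqrt a / d"
  proof -
    have sa0: "sqrt a > 0" using a by simp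
    have h: "sqrt a * sqrt a = a" using a by simp
    have "a / (d * sqrt a) = (sqrt a * sqrt a) / (d * sqrt a)" by (simp only: h)
    also have "\<dots> = sqrt a / d" using sa0 by (simp only: nonzero_mult_divide_mult_cancel_right[of "sqrt a"] less_irrefl)
    finally show ?thesis .
  qed
  finally have st: "?s / tau j \<le> sqrt a / d" .
  have "(muj lam eta th tau eps j)\<^sup>2 = (?s / tau j)\<^sup>2 * (th j - eta j)\<^sup>2"
    unfolding muj_def by (simp add: power2_eq_square field_simps)
  also have "\<dots> \<le> (sqrt a / d)\<^sup>2 * (th j - eta j)\<^sup>2"
    using st s0 t by (intro mult_right_mono power_mono) auto
  also have "\<dots> = a * (th j - eta j)\<^sup>2 / d\<^sup>2" using a by (simp add: power_divide)
  finally show ?thesis unfolding a_def .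
qed



theorem mainTheorem6:
  fixes lam th eta :: "nat \<Rightarrow> real"
    and tau :: "real \<Rightarrow> nat \<Rightarrow> real"
    and m :: "real \<Rightarrow> nat"
    and d L :: real
  assumes lam_bdd: "\<exists>B. \<forall>j. \<bar>lam j\<bar> \<le> B"
    and lam_nz: "\<forall>j. lam j \<noteq> 0"
    and th_l2: "summable (\<lambda>j. (th j)^2)"
    and th_eta_l2: "summable (\<lambda>j. (th j - eta j)^2)"
    and tau_pos: "\<forall>eps j. 0 < eps \<and> eps < 1 \<longrightarrow> tau eps j > 0"
    and A: "assumptionA lam tau d"
    and m_pos: "\<forall>eps. 0 < eps \<and> eps < 1 \<longrightarrow> m eps \<ge> 1"
    and L_ge: "L \<ge> 1"
    and L_bound: "\<forall>eps. 0 < eps \<and> eps < 1 \<longrightarrow>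
        eps * real (m eps) * LamMax lam (m eps) / Phi lam th eta eps (m eps) \<le> L"
    and Phi_lim: "((\<lambda>eps. Phi lam th eta eps (m eps)) \<longlongrightarrow> 0) (at_right 0)"
  shows "\<exists>eps_th. 0 < eps_th \<and> eps_th < 1 \<and>
    (\<forall>eps c. 0 < eps \<and> eps < eps_th \<and> 0 < c \<and>
        c < 1 / (8 * (max (1 + 1 / d) (sqdist th eta / d^2) * L)) \<longrightarrow>
      (let K = max (1 + 1 / d) (sqdist th eta / d^2) * L;
           Ph = Phi lam th eta eps (m eps) in
       (\<integral>\<^sup>+ Y. emeasure (posterior lam eta (tau eps) eps (m eps) Y)
            {v. sqdist v th > (4 + 11 / 2 * K) * Ph} \<partial>data_law lam th eps)
          \<le> ennreal (2 * exp (- (real (m eps) / 36)))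
       \<and> (\<integral>\<^sup>+ Y. emeasure (posterior lam eta (tau eps) eps (m eps) Y)
            {v. sqdist v th < (1 - 8 * c * K) / (1 + 1 / d) * Ph} \<partial>data_law lam th eps)
          \<le> ennreal (2 * exp (- (c^2 * real (m eps) / 2)))))"
proof -
  obtain B where B: "\<forall>j. \<bar>lam j\<bar> \<le> B" using lam_bdd by blast
  have B0: "B > 0"
  proof -
    have "\<bar>lam 0\<bar> > 0" using lam_nz by simp
    then show ?thesis using B by (meson order_less_le_trans)
  qed
  have d0: "d > 0" using A unfolding assumptionA_def by simp
  have Ad: "\<And>eps j. 0 < eps \<Longrightarrow> eps < 1 \<Longrightarrow> j < Geps lam eps \<Longrightarrow>
      tau eps j \<ge> d * max (sqrt (eps * Lam lam j)) (eps * Lam lam j)"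
    using A unfolding assumptionA_def by blast
  have Lam_pos: "\<And>j. Lam lam j > 0" using lam_nz unfolding Lam_def by simp
  have Lam_ge: "\<And>j. Lam lam j \<ge> 1 / B\<^sup>2"
  proof -
    fix j
    have "\<bar>lam j\<bar>\<^sup>2 \<le> B\<^sup>2" using B by (intro power_mono) auto
    then have l2: "(lam j)\<^sup>2 \<le> B\<^sup>2" by simp
    have "0 < B\<^sup>2 * (lam j)\<^sup>2" using B0 lam_nz by simp
    then show "Lam lam j \<ge> 1 / B\<^sup>2" unfolding Lam_def by (rule divide_left_mono[OF l2, rotated]) simp
  qed
  define e0 where "e0 = min (Lam lam 0 / L) (1 / B\<^sup>2)"
  have e0: "e0 > 0" unfolding e0_def using Lam_pos L_ge B0 by simp
  have "eventually (\<lambda>eps. Phi lam th eta eps (m eps) < e0) (at_right 0)"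
    by (rule order_tendstoD(2)[OF Phi_lim e0])
  then obtain dl where dl: "dl > 0" and dlP: "\<And>eps. eps > 0 \<Longrightarrow> eps < dl \<Longrightarrow> Phi lam th eta eps (m eps) < e0"
    unfolding eventually_at_right_field by auto
  define eps_th where "eps_th = min dl (1/2)"
  show ?thesis
  proof (intro exI[of _ eps_th] conjI allI impI)
    show "0 < eps_th" "eps_th < 1" unfolding eps_th_def using dl by auto
    fix eps c :: real
    assume H: "0 < eps \<and> eps < eps_th \<and> 0 < c \<and> c < 1 / (8 * (max (1 + 1 / d) (sqdist th eta / d^2) * L))"
    define K where "K = max (1 + 1 / d) (sqdist th eta / d^2) * L"
    define mm where "mm = m eps"
    define Ph where "Ph = Phi lam th eta eps mm"
    define b where "b = bias th eta mm"
    define D where "D = sqdist th eta"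
    define a where "a = (\<lambda>j. eps * Lam lam j)"
    have eps: "0 < eps" "eps < 1" using H unfolding eps_th_def by auto
    have c: "0 < c" "c < 1 / (8 * K)" using H unfolding K_def by auto
    have m1: "mm \<ge> 1" unfolding mm_def using m_pos eps by auto
    have mpos: "real mm > 0" using m1 by simp
    have PhLt: "Ph < e0" unfolding Ph_def mm_def using dlP eps H unfolding eps_th_def by auto
    have taup: "\<And>j. tau eps j > 0" using tau_pos eps by auto
    have a_pos: "\<And>j. a j > 0" unfolding a_def using eps Lam_pos by simp
    have LamBar_ge: "LamBar lam mm \<ge> 1 / B\<^sup>2"
    proof -
      have "(\<Sum>j<mm. 1 / B\<^sup>2) \<le> (\<Sum>j<mm. Lam lam j)" using Lam_ge by (intro sum_mono) auto
      then have "real mm * (1 / B\<^sup>2) \<le> (\<Sum>j<mm. Lam lam j)" by simp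
      then show ?thesis unfolding LamBar_def using mpos by (simp add: pos_le_divide_eq mult.commute)
    qed
    have suma: "(\<Sum>j<mm. a j) = eps * real mm * LamBar lam mm"
      unfolding a_def LamBar_def using mpos by (simp add: sum_distrib_left[symmetric])
    have Phm: "Ph = max b (\<Sum>j<mm. a j)" unfolding Ph_def Phi_def b_def suma ..
    have sm_shift: "summable (\<lambda>j. (th (j + mm) - eta (j + mm))\<^sup>2)"
      using th_eta_l2 by (subst summable_iff_shift)
    have b0: "b \<ge> 0" unfolding b_def bias_def by (rule suminf_nonneg[OF sm_shift]) simp
    have LB0: "LamBar lam mm > 0" using LamBar_ge B0 by (smt (verit) divide_pos_pos zero_less_power)
    have Ph_pos: "Ph > 0"
    proof -
      have "eps * real mm * LamBar lam mm > 0" using eps mpos LB0 by simp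
      then show ?thesis using Phm suma by simp
    qed
    have finL: "finite {Lam lam j | j. j < mm}" by simp
    have LamMax_ge: "\<And>j. j < mm \<Longrightarrow> Lam lam j \<le> LamMax lam mm"
      unfolding LamMax_def by (rule Max_ge[OF finL]) auto
    have LMb: "eps * real mm * LamMax lam mm \<le> L * Ph"
    proof -
      have "eps * real mm * LamMax lam mm / Ph \<le> L" using L_bound eps unfolding Ph_def mm_def by auto
      then show ?thesis using Ph_pos by (simp add: pos_divide_le_eq mult.commute)
    qed
    have amax: "\<And>j. j < mm \<Longrightarrow> a j \<le> L * Ph / mm"
    proof -
      fix j assume j: "j < mm"
      have "a j \<le> eps * LamMax lam mm" unfolding a_def using LamMax_ge[OF j] eps by simp
      also have "\<dots> = eps * real mm * LamMax lam mm / mm" using mpos by simp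
      also have "\<dots> \<le> L * Ph / mm" using LMb mpos by (intro divide_right_mono) auto
      finally show "a j \<le> L * Ph / mm" .
    qed
    have mG: "mm \<le> Geps lam eps"
    proof -
      have LPh: "L * Ph / mm \<le> L * Ph"
      proof -
        have "L * Ph * 1 \<le> L * Ph * real mm" using m1 L_ge Ph_pos by (intro mult_left_mono) auto
        then show ?thesis using mpos by (simp add: pos_divide_le_eq)
      qed
      have "L * Ph < L * e0" using PhLt L_ge by simp
      also have "L * e0 \<le> Lam lam 0" unfolding e0_def using L_ge by (simp add: min_def field_simps)
      finally have "L * Ph < Lam lam 0" .
      moreover have "eps * LamMax lam mm \<le> L * Ph / mm"
        using LMb mpos by (simp add: pos_le_divide_eq mult.commute mult.left_commute)
      ultimately have c1: "eps * LamMax lam mm \<le> Lam lam 0" using LPh by linarith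
      have "eps * real mm * (1 / B\<^sup>2) \<le> eps * real mm * LamBar lam mm"
        using LamBar_ge eps mpos by (intro mult_left_mono) auto
      also have "\<dots> \<le> Ph" using Phm suma by simp
      also have "\<dots> < 1 / B\<^sup>2" using PhLt unfolding e0_def by simp
      finally have h: "eps * real mm * (1 / B\<^sup>2) < 1 * (1 / B\<^sup>2)" by simp
      have "eps * real mm < 1" by (rule mult_right_less_imp_less[OF h]) simp
      then have "real mm \<le> 1 / eps" using eps by (simp add: pos_le_divide_eq mult.commute)
      then have c2: "mm \<le> nat \<lfloor>1 / eps\<rfloor>" by (rule le_nat_floor)
      have fin: "finite {k. 1 \<le> k \<and> k \<le> nat \<lfloor>1 / eps\<rfloor> \<and> eps * LamMax lam k \<le> Lam lam 0}"
        by (rule finite_subset[of _ "{..nat \<lfloor>1 / eps\<rfloor>}"]) auto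
      show ?thesis unfolding Geps_def by (rule Max_ge[OF fin]) (use m1 c1 c2 in auto)
    qed
    have tauA: "\<And>j. j < mm \<Longrightarrow> tau eps j \<ge> d * max (sqrt (a j)) (a j)"
      unfolding a_def using Ad eps mG by (meson order_less_le_trans)
    have tau1: "\<And>j. j < mm \<Longrightarrow> tau eps j \<ge> d * sqrt (a j)"
      using tauA d0 by (meson max.cobounded1 mult_left_mono order_trans less_imp_le)
    have tau2: "\<And>j. j < mm \<Longrightarrow> tau eps j \<ge> d * a j"
      using tauA d0 by (meson max.cobounded2 mult_left_mono order_trans less_imp_le)
    have V_le: "\<And>j. j < mm \<Longrightarrow> Vj lam (tau eps) eps j \<le> 2 * a j"
      unfolding a_def using eps taup lam_nz by (intro Vj_le) auto
    have V_ge: "\<And>j. j < mm \<Longrightarrow> a j / (1 + 1/d) \<le> Vj lam (tau eps) eps j"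
      unfolding a_def using eps taup lam_nz d0 tau2 unfolding a_def by (intro Vj_ge) auto
    have V_nn: "\<And>j. j < mm \<Longrightarrow> Vj lam (tau eps) eps j \<ge> 0"
      using V_ge a_pos d0 by (smt (verit) divide_pos_pos)
    have mu_le: "\<And>j. j < mm \<Longrightarrow> (muj lam eta th (tau eps) eps j)\<^sup>2 \<le> a j * (th j - eta j)\<^sup>2 / d\<^sup>2"
      unfolding a_def using eps taup lam_nz d0 tau1 unfolding a_def by (intro muj_le) auto
    have sD: "(\<Sum>j<mm. (th j - eta j)\<^sup>2) \<le> D"
      unfolding D_def sqdist_def by (rule sum_le_suminf[OF th_eta_l2]) auto
    have sa: "(\<Sum>j<mm. a j) \<le> Ph" using Phm by simp
    have bPh: "b \<le> Ph" using Phm by simp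
    have KL: "K \<ge> L" unfolding K_def using L_ge d0
      by (smt (verit) divide_pos_pos max.cobounded1 mult_le_cancel_right1)
    have KD: "L * D / d\<^sup>2 \<le> K"
    proof -
      have "(D / d\<^sup>2) * L \<le> max (1 + 1 / d) (D / d\<^sup>2) * L" using L_ge by (intro mult_right_mono) auto
      then show ?thesis unfolding K_def D_def by (simp add: mult.commute)
    qed
    have KLd: "(1 + 1/d) * L \<le> K" unfolding K_def using L_ge by (simp add: mult_right_mono)
    define s1 where "s1 = real mm / (8 * L * Ph)"
    note U1 = upper_real(1)[where m=mm and Ph=Ph and L=L and K=K and D=D and d=d and a=a and V="\<lambda>j. Vj lam (tau eps) eps j" and dl="\<lambda>j. th j - eta j" and b=b and s=s1,
       OF m1 Ph_pos L_ge KL KD a_pos V_le V_nn mu_le sa amax sD bPh s1_def]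
    note U2 = upper_real(2)[where m=mm and Ph=Ph and L=L and K=K and D=D and d=d and a=a and V="\<lambda>j. Vj lam (tau eps) eps j" and mu="muj lam eta th (tau eps) eps" and dl="\<lambda>j. th j - eta j" and b=b and s=s1,
       OF m1 Ph_pos L_ge KL KD a_pos V_le V_nn mu_le sa amax sD bPh s1_def]
    define s2 where "s2 = - (c * real mm / (2 * Ph))"
    note Lo1 = lower_real(1)[where m=mm and Ph=Ph and L=L and d=d and K=K and c=c and a=a and V="\<lambda>j. Vj lam (tau eps) eps j" and b=b and s=s2,
       OF m1 Ph_pos L_ge d0 KLd c a_pos V_le V_ge Phm b0 amax s2_def]
    note Lo2 = lower_real(2)[where m=mm and Ph=Ph and L=L and d=d and K=K and c=c and a=a and V="\<lambda>j. Vj lam (tau eps) eps j" and b=b and mu="muj lam eta th (tau eps) eps" and s=s2,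
       OF m1 Ph_pos L_ge d0 KLd c a_pos V_le V_ge Phm b0 amax s2_def]
    have T1: "(\<integral>\<^sup>+ Y. emeasure (posterior lam eta (tau eps) eps mm Y)
            {v. sqdist v th > (4 + 11 / 2 * K) * Ph} \<partial>data_law lam th eps)
          \<le> ennreal (2 * exp (- (real mm / 36)))"
    proof -
      have s1p: "s1 > 0" unfolding s1_def using mpos L_ge Ph_pos by simp
      have "(\<integral>\<^sup>+ Y. emeasure (posterior lam eta (tau eps) eps mm Y)
            {v. sqdist v th > (4 + 11 / 2 * K) * Ph} \<partial>data_law lam th eps)
          \<le> ennreal (exp (- s1 * ((4 + 11 / 2 * K) * Ph)) * (exp (s1 * bias th eta mm) * (\<Prod>j<mm. exp (s1 * (muj lam eta th (tau eps) eps j)\<^sup>2 / (1 - 2 * s1 * Vj lam (tau eps) eps j)) / sqrt (1 - 2 * s1 * Vj lam (tau eps) eps j))))"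
        by (rule tail_bound[OF eps(1) taup th_eta_l2]) (use U1 s1p in \<open>auto\<close>)
      also have "\<dots> \<le> ennreal (2 * exp (- (real mm / 36)))"
        using U2 unfolding b_def by (rule ennreal_leI)
      finally show ?thesis .
    qed
    have T2: "(\<integral>\<^sup>+ Y. emeasure (posterior lam eta (tau eps) eps mm Y)
            {v. sqdist v th < (1 - 8 * c * K) / (1 + 1 / d) * Ph} \<partial>data_law lam th eps)
          \<le> ennreal (2 * exp (- (c\<^sup>2 * real mm / 2)))"
    proof -
      have s2n: "s2 < 0" unfolding s2_def using mpos c Ph_pos by simp
      have "(\<integral>\<^sup>+ Y. emeasure (posterior lam eta (tau eps) eps mm Y)
            {v. sqdist v th < (1 - 8 * c * K) / (1 + 1 / d) * Ph} \<partial>data_law lam th eps)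
          \<le> ennreal (exp (- s2 * ((1 - 8 * c * K) / (1 + 1 / d) * Ph)) * (exp (s2 * bias th eta mm) * (\<Prod>j<mm. exp (s2 * (muj lam eta th (tau eps) eps j)\<^sup>2 / (1 - 2 * s2 * Vj lam (tau eps) eps j)) / sqrt (1 - 2 * s2 * Vj lam (tau eps) eps j))))"
      proof (rule tail_bound[OF eps(1) taup th_eta_l2])
        show "\<And>j. j < mm \<Longrightarrow> 1 - 2 * s2 * Vj lam (tau eps) eps j > 0" using Lo1 by auto
        fix v assume "v \<in> {v. sqdist v th < (1 - 8 * c * K) / (1 + 1 / d) * Ph}"
        then have "sqdist v th - (1 - 8 * c * K) / (1 + 1 / d) * Ph \<le> 0" by simp
        then show "s2 * (sqdist v th - (1 - 8 * c * K) / (1 + 1 / d) * Ph) \<ge> 0"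
          using s2n by (simp add: mult_nonpos_nonpos)
      qed
      also have "\<dots> \<le> ennreal (2 * exp (- (c\<^sup>2 * real mm / 2)))"
        using Lo2 unfolding b_def by (rule ennreal_leI)
      finally show ?thesis .
    qed
    show "let K = max (1 + 1 / d) (sqdist th eta / d^2) * L;
           Ph = Phi lam th eta eps (m eps) in
       (\<integral>\<^sup>+ Y. emeasure (posterior lam eta (tau eps) eps (m eps) Y)
            {v. sqdist v th > (4 + 11 / 2 * K) * Ph} \<partial>data_law lam th eps)
          \<le> ennreal (2 * exp (- (real (m eps) / 36)))
       \<and> (\<integral>\<^sup>+ Y. emeasure (posterior lam eta (tau eps) eps (m eps) Y)
            {v. sqdist v th < (1 - 8 * c * K) / (1 + 1 / d) * Ph} \<partial>data_law lam th eps)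
          \<le> ennreal (2 * exp (- (c^2 * real (m eps) / 2)))"
      unfolding Let_def K_def[symmetric] mm_def[symmetric] Ph_def[symmetric] using T1 T2 by simp
  qed
qed


end
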